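(* For any $C\ge2$ and any $\eta\ge2$, there exists a forward-KL-regularized linear bandit instance (of dimension $2$) such that $C^{\pi^*}\ge C/2$ and $D^2_{\pi^*}=\Theta(1)$.
   Context: A forward-KL-regularized linear bandit instance (single context) consists of a finite action set $\mathcal A$, a feature map $\phi:\mathcal A\to\mathbb R^d$, a parameter set $\Theta\subset\mathbb R^d$ defining $\mathcal F=\{a\mapsto\langle\theta,\phi(a)\rangle:\theta\in\Theta\}$, a true parameter $\theta^*\in\Theta$ with $r(a)=\langle\theta^*,\phi(a)\rangle\in[0,1]$, a full-support reference policy $\pi^{\mathrm{ref}}\in\Delta(\mathcal A)$, and $\eta>0$. $\pi^*=\arg\max_{\pi\in\Delta(\mathcal A)}\sum_a r(a)\pi(a)-\eta^{-1}\mathrm{KL}(\pi^{\mathrm{ref}}\|\pi)$; $C^{\pi^*}=\max_a\pi^*(a)/\pi^{\mathrm{ref}}(a)$; $D^2(a)=\sup_{g,h\in\mathcal F}\frac{(g(a)-h(a))^2}{\mathbb E_{a'\sim\pi^{\mathrm{ref}}}[(g(a')-h(a'))^2]}$; $D^2_{\pi^*}=\mathbb E_{a\sim\pi^*}D^2(a)$. $\Theta(1)$ means bounded above and below by absolute positive constants. *)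

theory Defs
  imports "HOL-Analysis.Analysis"
begin

definition pol_simplex :: "nat set \<Rightarrow> (nat \<Rightarrow> real) set" where
  "pol_simplex A = {\<pi>. (\<forall>a\<in>A. 0 \<le> \<pi> a) \<and> (\<forall>a. a \<notin> A \<longrightarrow> \<pi> a = 0) \<and> sum \<pi> A = 1}"

definition fkl :: "nat set \<Rightarrow> (nat \<Rightarrow> real) \<Rightarrow> (nat \<Rightarrow> real) \<Rightarrow> ereal" where
  "fkl A p q = (if \<exists>a\<in>A. 0 < p a \<and> q a = 0 then \<infinity>
      else ereal (\<Sum>a\<in>A. if p a = 0 then 0 else p a * ln (p a / q a)))"

definition reg_obj :: "nat set \<Rightarrow> (nat \<Rightarrow> real) \<Rightarrow> (nat \<Rightarrow> real) \<Rightarrow> real \<Rightarrow> (nat \<Rightarrow> real) \<Rightarrow> ereal" where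
  "reg_obj A r piref \<eta> \<pi> = ereal (\<Sum>a\<in>A. r a * \<pi> a) - ereal (1 / \<eta>) * fkl A piref \<pi>"

definition opt_policy :: "nat set \<Rightarrow> (nat \<Rightarrow> real) \<Rightarrow> (nat \<Rightarrow> real) \<Rightarrow> real \<Rightarrow> (nat \<Rightarrow> real)" where
  "opt_policy A r piref \<eta> = (THE \<pi>. \<pi> \<in> pol_simplex A \<and>
      (\<forall>\<pi>'\<in>pol_simplex A. reg_obj A r piref \<eta> \<pi>' \<le> reg_obj A r piref \<eta> \<pi>))"

definition coverage :: "nat set \<Rightarrow> (nat \<Rightarrow> real) \<Rightarrow> (nat \<Rightarrow> real) \<Rightarrow> real" where
  "coverage A piref \<pi> = Max ((\<lambda>a. \<pi> a / piref a) ` A)"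

text \<open>D^2(a) for the linear class F = {a. <theta, phi a> : theta in Theta}.\<close>

definition Dsq :: "nat set \<Rightarrow> (nat \<Rightarrow> real^2) \<Rightarrow> (real^2) set \<Rightarrow> (nat \<Rightarrow> real) \<Rightarrow> nat \<Rightarrow> ereal" where
  "Dsq A \<phi> \<Theta> piref a = (SUP p\<in>\<Theta> \<times> \<Theta>.
      ereal ((fst p \<bullet> \<phi> a - snd p \<bullet> \<phi> a)\<^sup>2 /
             (\<Sum>a'\<in>A. piref a' * (fst p \<bullet> \<phi> a' - snd p \<bullet> \<phi> a')\<^sup>2)))"

definition Dsq_pol :: "nat set \<Rightarrow> (nat \<Rightarrow> real^2) \<Rightarrow> (real^2) set \<Rightarrow> (nat \<Rightarrow> real) \<Rightarrow> (nat \<Rightarrow> real) \<Rightarrow> ereal" where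
  "Dsq_pol A \<phi> \<Theta> piref \<pi> = (\<Sum>a\<in>A. ereal (\<pi> a) * Dsq A \<phi> \<Theta> piref a)"

definition fkl_lin_bandit :: "nat set \<Rightarrow> (nat \<Rightarrow> real^2) \<Rightarrow> (real^2) set \<Rightarrow> real^2 \<Rightarrow> (nat \<Rightarrow> real) \<Rightarrow> real \<Rightarrow> bool" where
  "fkl_lin_bandit A \<phi> \<Theta> \<theta> piref \<eta> \<longleftrightarrow>
     finite A \<and> A \<noteq> {} \<and> \<theta> \<in> \<Theta> \<and>
     (\<forall>a\<in>A. 0 \<le> \<theta> \<bullet> \<phi> a \<and> \<theta> \<bullet> \<phi> a \<le> 1) \<and>
     (\<forall>a\<in>A. 0 < piref a) \<and> sum piref A = 1 \<and> 0 < \<eta>"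

end

theory Submission
  imports Defs
begin

lemma ln_strict: "0 < (x::real) \<Longrightarrow> x \<noteq> 1 \<Longrightarrow> ln x < x - 1"
  using ln_le_minus_one ln_eq_minus_one by (smt (verit))

lemma strict_better:
  assumes fin: "finite A" and pr: "\<forall>a\<in>A. 0 < piref a" and eta: "0 < \<eta>"
    and ps: "ps \<in> pol_simplex A" and pspos: "\<forall>a\<in>A. 0 < ps a"
    and stat: "\<forall>a\<in>A. r a + piref a / (\<eta> * ps a) = L"
    and p': "p' \<in> pol_simplex A" and ne: "p' \<noteq> ps"
  shows "reg_obj A r piref \<eta> p' < reg_obj A r piref \<eta> ps"
proof -
  have fs: "fkl A piref ps = ereal (\<Sum>a\<in>A. piref a * ln (piref a / ps a))"
    proof -
    have "\<not> (\<exists>a\<in>A. 0 < piref a \<and> ps a = 0)" using pspos by force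
    then have "fkl A piref ps = ereal (\<Sum>a\<in>A. if piref a = 0 then 0 else piref a * ln (piref a / ps a))"
      unfolding fkl_def by (simp only: if_False)
    also have "\<dots> = ereal (\<Sum>a\<in>A. piref a * ln (piref a / ps a))"
      using pr by (intro arg_cong[where f=ereal] sum.cong) auto
    finally show ?thesis .
  qed
  have Rs: "reg_obj A r piref \<eta> ps = ereal ((\<Sum>a\<in>A. r a * ps a) - (1/\<eta>) * (\<Sum>a\<in>A. piref a * ln (piref a / ps a)))"
    unfolding reg_obj_def fs by simp
  show ?thesis
  proof (cases "\<exists>a\<in>A. p' a = 0")
    case True
    then obtain a where "a \<in> A" "p' a = 0" by blast
    then have "\<exists>a\<in>A. 0 < piref a \<and> p' a = 0" using pr by blast
    then have "fkl A piref p' = \<infinity>" unfolding fkl_def by (simp only: if_True)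
    then have "reg_obj A r piref \<eta> p' = - \<infinity>" unfolding reg_obj_def using eta by simp
    then show ?thesis unfolding Rs by simp
  next
    case False
    have nn: "\<forall>a\<in>A. 0 \<le> p' a" using p' by (simp add: pol_simplex_def)
    have p'pos: "\<forall>a\<in>A. 0 < p' a"
    proof
      fix a assume "a \<in> A"
      then have "0 \<le> p' a" "p' a \<noteq> 0" using nn False by blast+
      then show "0 < p' a" by linarith
    qed
    have f': "fkl A piref p' = ereal (\<Sum>a\<in>A. piref a * ln (piref a / p' a))"
      proof -
    have "\<not> (\<exists>a\<in>A. 0 < piref a \<and> p' a = 0)" using p'pos by force
    then have "fkl A piref p' = ereal (\<Sum>a\<in>A. if piref a = 0 then 0 else piref a * ln (piref a / p' a))"
      unfolding fkl_def by (simp only: if_False)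
    also have "\<dots> = ereal (\<Sum>a\<in>A. piref a * ln (piref a / p' a))"
      using pr by (intro arg_cong[where f=ereal] sum.cong) auto
    finally show ?thesis .
  qed
    have R': "reg_obj A r piref \<eta> p' = ereal ((\<Sum>a\<in>A. r a * p' a) - (1/\<eta>) * (\<Sum>a\<in>A. piref a * ln (piref a / p' a)))"
      unfolding reg_obj_def f' by simp
    obtain b where b: "b \<in> A" "p' b \<noteq> ps b"
    proof -
      have "\<exists>b. p' b \<noteq> ps b" using ne by auto
      then obtain b where bb: "p' b \<noteq> ps b" by auto
      moreover have "b \<in> A" proof (rule ccontr)
        assume "b \<notin> A"
        moreover have "\<forall>a. a \<notin> A \<longrightarrow> p' a = 0" "\<forall>a. a \<notin> A \<longrightarrow> ps a = 0"
          using p' ps unfolding pol_simplex_def by simp_all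
        ultimately have "p' b = ps b" by simp
        then show False using bb by simp
      qed
      ultimately show ?thesis using that by auto
    qed
    have lnsplit: "\<And>a. a \<in> A \<Longrightarrow> ln (piref a / p' a) = ln (piref a / ps a) - ln (p' a / ps a)"
    proof -
      fix a assume "a \<in> A"
      then have "0 < piref a" "0 < ps a" "0 < p' a" using pr pspos p'pos by auto
      then show "ln (piref a / p' a) = ln (piref a / ps a) - ln (p' a / ps a)" by (simp add: ln_div)
    qed
    have key: "(\<Sum>a\<in>A. piref a * ln (p' a / ps a)) < (\<Sum>a\<in>A. piref a * (p' a / ps a - 1))"
    proof (rule sum_strict_mono_ex1[OF fin])
      show "\<forall>x\<in>A. piref x * ln (p' x / ps x) \<le> piref x * (p' x / ps x - 1)"
        using pr pspos p'pos by (auto intro!: mult_left_mono ln_le_minus_one)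
      have "ln (p' b / ps b) < p' b / ps b - 1"
        using b pspos p'pos by (intro ln_strict) auto
      then show "\<exists>a\<in>A. piref a * ln (p' a / ps a) < piref a * (p' a / ps a - 1)"
        using b pr by (intro bexI[of _ b]) auto
    qed
    have pw: "\<And>a. a \<in> A \<Longrightarrow> r a * (p' a - ps a) + (1/\<eta>) * (piref a * (p' a / ps a - 1))
          = (r a + piref a / (\<eta> * ps a)) * (p' a - ps a)"
      using pspos eta by (auto simp: field_simps)
    have eq: "(\<Sum>a\<in>A. r a * (p' a - ps a)) + (1/\<eta>) * (\<Sum>a\<in>A. piref a * (p' a / ps a - 1)) = 0"
    proof -
      have "(\<Sum>a\<in>A. r a * (p' a - ps a)) + (1/\<eta>) * (\<Sum>a\<in>A. piref a * (p' a / ps a - 1))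
          = (\<Sum>a\<in>A. r a * (p' a - ps a) + (1/\<eta>) * (piref a * (p' a / ps a - 1)))"
        by (simp only: sum.distrib sum_distrib_left)
      also have "\<dots> = (\<Sum>a\<in>A. (r a + piref a / (\<eta> * ps a)) * (p' a - ps a))"
        using pw by (rule sum.cong[OF refl])
      also have "\<dots> = (\<Sum>a\<in>A. L * (p' a - ps a))" using stat by simp
      also have "\<dots> = L * (sum p' A - sum ps A)" by (simp only: sum_distrib_left[symmetric] sum_subtractf)
      also have "\<dots> = 0" using p' ps unfolding pol_simplex_def by simp
      finally show ?thesis .
    qed
    have s1: "(\<Sum>a\<in>A. piref a * ln (piref a / p' a)) = (\<Sum>a\<in>A. piref a * ln (piref a / ps a)) - (\<Sum>a\<in>A. piref a * ln (p' a / ps a))"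
    proof -
      have "(\<Sum>a\<in>A. piref a * ln (piref a / p' a)) = (\<Sum>a\<in>A. piref a * ln (piref a / ps a) - piref a * ln (p' a / ps a))"
        using lnsplit by (intro sum.cong) (auto simp: right_diff_distrib)
      then show ?thesis by (simp only: sum_subtractf)
    qed
    have s2: "(\<Sum>a\<in>A. r a * p' a) = (\<Sum>a\<in>A. r a * ps a) + (\<Sum>a\<in>A. r a * (p' a - ps a))"
    proof -
      have "(\<Sum>a\<in>A. r a * p' a) = (\<Sum>a\<in>A. r a * ps a + r a * (p' a - ps a))"
        by (intro sum.cong) (auto simp: right_diff_distrib)
      then show ?thesis by (simp only: sum.distrib)
    qed
    have "(1/\<eta>) * (\<Sum>a\<in>A. piref a * ln (p' a / ps a)) < (1/\<eta>) * (\<Sum>a\<in>A. piref a * (p' a / ps a - 1))"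
      using key eta by (intro mult_strict_left_mono) auto
    then have "(\<Sum>a\<in>A. r a * p' a) - (1/\<eta>) * (\<Sum>a\<in>A. piref a * ln (piref a / p' a))
       < (\<Sum>a\<in>A. r a * ps a) - (1/\<eta>) * (\<Sum>a\<in>A. piref a * ln (piref a / ps a))"
      unfolding s1 s2 using eq by (simp add: right_diff_distrib)
    then show ?thesis unfolding R' Rs by simp
  qed
qed

lemma opt_is:
  assumes fin: "finite A" and pr: "\<forall>a\<in>A. 0 < piref a" and eta: "0 < \<eta>"
    and ps: "ps \<in> pol_simplex A" and pspos: "\<forall>a\<in>A. 0 < ps a"
    and stat: "\<forall>a\<in>A. r a + piref a / (\<eta> * ps a) = L"
  shows "opt_policy A r piref \<eta> = ps"
  unfolding opt_policy_def
proof (rule the_equality)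
  show "ps \<in> pol_simplex A \<and> (\<forall>\<pi>'\<in>pol_simplex A. reg_obj A r piref \<eta> \<pi>' \<le> reg_obj A r piref \<eta> ps)"
    using ps strict_better[OF assms] by (metis order.order_iff_strict)
next
  fix \<pi> assume h: "\<pi> \<in> pol_simplex A \<and> (\<forall>\<pi>'\<in>pol_simplex A. reg_obj A r piref \<eta> \<pi>' \<le> reg_obj A r piref \<eta> \<pi>)"
  show "\<pi> = ps"
  proof (rule ccontr)
    assume "\<pi> \<noteq> ps"
    then have "reg_obj A r piref \<eta> \<pi> < reg_obj A r piref \<eta> ps" using h strict_better[OF assms] by blast
    moreover have "reg_obj A r piref \<eta> ps \<le> reg_obj A r piref \<eta> \<pi>" using h ps by blast
    ultimately show False by simp
  qed
qed

theorem propositionB2: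
  shows "\<exists>c1 c2 :: real. 0 < c1 \<and> 0 < c2 \<and>
    (\<forall>C \<eta> :: real. 2 \<le> C \<longrightarrow> 2 \<le> \<eta> \<longrightarrow>
      (\<exists>(A :: nat set) (\<phi> :: nat \<Rightarrow> real^2) (\<Theta> :: (real^2) set) (\<theta> :: real^2) (piref :: nat \<Rightarrow> real).
         fkl_lin_bandit A \<phi> \<Theta> \<theta> piref \<eta> \<and>
         (let \<pi> = opt_policy A (\<lambda>a. \<theta> \<bullet> \<phi> a) piref \<eta> in
            C / 2 \<le> coverage A piref \<pi> \<and>
            ereal c1 \<le> Dsq_pol A \<phi> \<Theta> piref \<pi> \<and> Dsq_pol A \<phi> \<Theta> piref \<pi> \<le> ereal c2)))"
proof -
  have H: "\<forall>C \<eta> :: real. 2 \<le> C \<longrightarrow> 2 \<le> \<eta> \<longrightarrow>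
      (\<exists>(A :: nat set) (\<phi> :: nat \<Rightarrow> real^2) (\<Theta> :: (real^2) set) (\<theta> :: real^2) (piref :: nat \<Rightarrow> real).
         fkl_lin_bandit A \<phi> \<Theta> \<theta> piref \<eta> \<and>
         (let \<pi> = opt_policy A (\<lambda>a. \<theta> \<bullet> \<phi> a) piref \<eta> in
            C / 2 \<le> coverage A piref \<pi> \<and>
            ereal 1 \<le> Dsq_pol A \<phi> \<Theta> piref \<pi> \<and> Dsq_pol A \<phi> \<Theta> piref \<pi> \<le> ereal 1))"
  proof (intro allI impI)
  fix C \<eta> :: real assume C2: "2 \<le> C" and e2: "2 \<le> \<eta>"
  define s where "s = 1 - 1/C"
  define q where "q = 1 - s/\<eta>"
  define p where "p = q/C"
  define A :: "nat set" where "A = {0,1}"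
  define \<phi> :: "nat \<Rightarrow> real^2" where "\<phi> = (\<lambda>a. if a = 0 then vector [1,1] else vector [0,1])"
  define t :: "real^2" where "t = vector [1,0]"
  define t' :: "real^2" where "t' = vector [1,1]"
  define \<Theta> where "\<Theta> = {t, t'}"
  define piref :: "nat \<Rightarrow> real" where "piref = (\<lambda>a. if a = 0 then p else 1 - p)"
  define ps :: "nat \<Rightarrow> real" where "ps = (\<lambda>a. if a = 0 then q else if a = 1 then 1 - q else 0)"
  have s1: "1/2 \<le> s" "s < 1" using C2 unfolding s_def by (auto simp: field_simps)
  have sq: "0 < s/\<eta>" "s/\<eta> \<le> 1/2" using s1 e2 by (auto simp: field_simps)
  have q1: "1/2 \<le> q" "q < 1" using sq unfolding q_def by auto
  have p1: "0 < p" "p < 1" using q1 C2 unfolding p_def by (auto simp: field_simps)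
  have ip: "\<And>x y u v. (vector [x, y] :: real^2) \<bullet> vector [u, v] = x*u + y*(v::real)"
    by (simp add: inner_vec_def sum_2)
  have r0: "t \<bullet> \<phi> 0 = 1" and r1: "t \<bullet> \<phi> 1 = 0" unfolding t_def \<phi>_def by (simp_all add: ip)
  have rA: "\<forall>a\<in>A. t \<bullet> \<phi> a = (if a = 0 then 1 else 0)" unfolding A_def using r0 r1 by auto
  have bandit: "fkl_lin_bandit A \<phi> \<Theta> t piref \<eta>"
    unfolding fkl_lin_bandit_def using rA p1 e2 by (auto simp: A_def \<Theta>_def piref_def)
  have ps_simp: "ps \<in> pol_simplex A" using q1 unfolding pol_simplex_def ps_def A_def by auto
  have pspos: "\<forall>a\<in>A. 0 < ps a" using q1 unfolding ps_def A_def by auto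
  have prpos: "\<forall>a\<in>A. 0 < piref a" using p1 unfolding piref_def A_def by auto
  have st0: "1 + p / (\<eta> * q) = 1 + 1/(\<eta>*C)" using q1 C2 e2 unfolding p_def by (simp add: field_simps)
  have st1: "(1 - p) / (\<eta> * (1 - q)) = 1 + 1/(\<eta>*C)"
  proof -
    have "1 - q = s/\<eta>" unfolding q_def by simp
    moreover have "1 - p = s * (1 + 1/(\<eta>*C))" unfolding p_def q_def s_def using C2 e2 by (simp add: field_simps)
    moreover have "\<eta> * (s/\<eta>) = s" using e2 by simp
    ultimately show ?thesis using s1 by simp
  qed
  have stat: "\<forall>a\<in>A. t \<bullet> \<phi> a + piref a / (\<eta> * ps a) = 1 + 1/(\<eta>*C)"
    unfolding A_def using st0 st1 r0 r1 by (auto simp: piref_def ps_def)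
  have opt: "opt_policy A (\<lambda>a. t \<bullet> \<phi> a) piref \<eta> = ps"
    by (rule opt_is[OF _ prpos _ ps_simp pspos stat]) (use e2 in \<open>auto simp: A_def\<close>)
  have cov: "C / 2 \<le> coverage A piref ps"
  proof -
    have "ps 0 / piref 0 = C" unfolding ps_def piref_def p_def using q1 C2 by simp
    moreover have "ps 0 / piref 0 \<le> coverage A piref ps" unfolding coverage_def
      by (rule Max_ge) (auto simp: A_def)
    ultimately show ?thesis using C2 by simp
  qed
  have diff: "\<And>a. a \<in> A \<Longrightarrow> (t \<bullet> \<phi> a - t' \<bullet> \<phi> a)\<^sup>2 = 1 \<and> (t' \<bullet> \<phi> a - t \<bullet> \<phi> a)\<^sup>2 = 1"
    unfolding A_def t_def t'_def \<phi>_def by (auto simp: ip)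
  have den1: "(\<Sum>a'\<in>A. piref a' * (t \<bullet> \<phi> a' - t' \<bullet> \<phi> a')\<^sup>2) = 1"
    "(\<Sum>a'\<in>A. piref a' * (t' \<bullet> \<phi> a' - t \<bullet> \<phi> a')\<^sup>2) = 1"
    using diff by (simp_all add: A_def piref_def)
  have D1: "Dsq A \<phi> \<Theta> piref a = 1" if "a \<in> A" for a
  proof -
    have "\<Theta> \<times> \<Theta> = {(t,t),(t,t'),(t',t),(t',t')}" unfolding \<Theta>_def by auto
    then show ?thesis unfolding Dsq_def using diff[OF that] den1 by (simp add: sup_ereal_def max_def one_ereal_def bot_ereal_def)
  qed
  have Dp: "Dsq_pol A \<phi> \<Theta> piref ps = 1"
  proof -
    have "Dsq_pol A \<phi> \<Theta> piref ps = (\<Sum>a\<in>A. ereal (ps a))"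
      unfolding Dsq_pol_def using D1 by (intro sum.cong) auto
    also have "\<dots> = ereal (ps 0 + ps 1)" by (simp add: A_def)
    also have "\<dots> = 1" by (simp add: ps_def)
    finally show ?thesis .
  qed
  show "\<exists>(A :: nat set) (\<phi> :: nat \<Rightarrow> real^2) (\<Theta> :: (real^2) set) (\<theta> :: real^2) (piref :: nat \<Rightarrow> real).
         fkl_lin_bandit A \<phi> \<Theta> \<theta> piref \<eta> \<and>
         (let \<pi> = opt_policy A (\<lambda>a. \<theta> \<bullet> \<phi> a) piref \<eta> in
            C / 2 \<le> coverage A piref \<pi> \<and>
            ereal 1 \<le> Dsq_pol A \<phi> \<Theta> piref \<pi> \<and> Dsq_pol A \<phi> \<Theta> piref \<pi> \<le> ereal 1)"
  proof -
    have "fkl_lin_bandit A \<phi> \<Theta> t piref \<eta> \<and> (let \<pi> = opt_policy A (\<lambda>a. t \<bullet> \<phi> a) piref \<eta> in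
            C / 2 \<le> coverage A piref \<pi> \<and>
            ereal 1 \<le> Dsq_pol A \<phi> \<Theta> piref \<pi> \<and> Dsq_pol A \<phi> \<Theta> piref \<pi> \<le> ereal 1)"
      unfolding Let_def opt Dp using bandit cov by simp
    then show ?thesis by blast
  qed
  qed
  then show ?thesis using zero_less_one by blast
qed

end
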